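(* Consider the system $x(t+1)=x(t)-L(t)x(t)$ with $\mathbf{1}^*\mathbb{E}(L(t))=0$. Let $a^{r}_{\max}>0$ and $\alpha>0$ be constants such that almost surely $\sum_{j\ne i}a_{ij}(t)\le a^{r}_{\max}$ and $a_{ii}(t)\ge\alpha$ for all $i\in I$. Suppose that $a_{ij}(t)$ and $a_{kl}(t)$ are uncorrelated whenever $i\ne k$. Then $$\mathbb{E}[L(t)^*\mathbf{1}\mathbf{1}^*L(t)]\le\gamma\,\mathbb{E}[L(t)+L(t)^*-L(t)^*L(t)]\quad\text{with }\gamma=\frac{a^{r}_{\max}}{\alpha},$$ and consequently $\mathbb{E}[(\bar x(t)-\bar x(0))^2]\le\frac{\gamma}{N+\gamma}V(x(0))$ for all $t\ge0$.
   Context: Let $I$ be a finite set of $N$ nodes. For each $t\in\mathbb{Z}_{\ge0}$ let $A(t)=(a_{ij}(t))_{i,j\in I}$ be a random matrix with $a_{ij}(t)\ge 0$ and $\sum_{\ell\in I}a_{i\ell}(t)=1$ for all $i$; the matrices $A(t)$ are i.i.d. in $t$. $L(t)$ is the Laplacian: $L_{ij}(t)=-a_{ij}(t)$ for $i\ne j$, $L_{ii}(t)=\sum_{j\ne i}a_{ij}(t)$. $x(0)\in\mathbb{R}^I$ is deterministic. $\mathbf{1}$ is the all-ones vector, $M^*$ the transpose; for $y\in\mathbb{R}^I$, $\bar y=\frac1N\sum_i y_i$, $V(y)=\frac1N\sum_i(y_i-\bar y)^2$. For square matrices, $A\le B$ means $A-B$ is negative semidefinite. *)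

theory Defs
  imports "HOL-Probability.Probability"
begin

definition lap :: "real^'n^'n \<Rightarrow> real^'n^'n" where
  "lap a = (\<chi> i j. if i = j then (\<Sum>k\<in>UNIV - {i}. a $ i $ k) else - (a $ i $ j))"

definition ones :: "real^'n" where
  "ones = (\<chi> i. 1)"

definition ones_outer :: "real^'n^'n" where
  "ones_outer = (\<chi> i j. 1)"

definition neg_semidef :: "real^'n^'n \<Rightarrow> bool" where
  "neg_semidef P \<longleftrightarrow> (\<forall>y::real^'n. y \<bullet> (P *v y) \<le> 0)"

definition loewner_le :: "real^'n^'n \<Rightarrow> real^'n^'n \<Rightarrow> bool" where
  "loewner_le P Q \<longleftrightarrow> neg_semidef (P - Q)"

definition avg :: "real^'n \<Rightarrow> real" where
  "avg y = (\<Sum>i\<in>UNIV. y $ i) / real CARD('n)"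

definition Var :: "real^'n \<Rightarrow> real" where
  "Var y = (\<Sum>i\<in>UNIV. (y $ i - avg y)^2) / real CARD('n)"

primrec traj :: "(nat \<Rightarrow> 'a \<Rightarrow> real^'n^'n) \<Rightarrow> real^'n \<Rightarrow> nat \<Rightarrow> 'a \<Rightarrow> real^'n" where
  "traj A x0 0 \<omega> = x0"
| "traj A x0 (Suc t) \<omega> = traj A x0 t \<omega> - lap (A t \<omega>) *v traj A x0 t \<omega>"

end

theory Submission imports Defs begin


lemma (in prob_space) indep_fubini_le:
  fixes f :: "'b \<times> 'b \<Rightarrow> real" and N :: "'b measure" and K :: "'b measure" and X :: "'a \<Rightarrow> 'b" and Y :: "'a \<Rightarrow> 'b"
  assumes ind: "indep_var N X K Y"
   and f[measurable]: "f \<in> borel_measurable (N \<Otimes>\<^sub>M K)"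
   and g[measurable]: "g \<in> borel_measurable N"
   and intf: "integrable M (\<lambda>\<omega>. f (X \<omega>, Y \<omega>))"
   and intg: "integrable M (\<lambda>\<omega>. g (X \<omega>))"
   and le: "\<And>x. x \<in> space N \<Longrightarrow> integral\<^sup>L M (\<lambda>\<omega>. f (x, Y \<omega>)) \<le> g x"
  shows "integral\<^sup>L M (\<lambda>\<omega>. f (X \<omega>, Y \<omega>)) \<le> integral\<^sup>L M (\<lambda>\<omega>. g (X \<omega>))"
proof -
  have rv: "random_variable N X" "random_variable K Y"
    and eq: "distr M N X \<Otimes>\<^sub>M distr M K Y = distr M (N \<Otimes>\<^sub>M K) (\<lambda>x. (X x, Y x))"
    using ind unfolding indep_var_distribution_eq by auto
  note [measurable] = rv
  interpret PX: prob_space "distr M N X" by (rule prob_space_distr) (rule rv)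
  interpret PY: prob_space "distr M K Y" by (rule prob_space_distr) (rule rv)
  interpret P: pair_sigma_finite "distr M N X" "distr M K Y"
    by (intro pair_sigma_finite.intro PX.sigma_finite_measure_axioms PY.sigma_finite_measure_axioms)
  have intP: "integrable (distr M N X \<Otimes>\<^sub>M distr M K Y) f"
    unfolding eq by (subst integrable_distr_eq) (auto simp: intf)
  have "integral\<^sup>L M (\<lambda>\<omega>. f (X \<omega>, Y \<omega>)) = integral\<^sup>L (distr M (N \<Otimes>\<^sub>M K) (\<lambda>x. (X x, Y x))) f"
    by (subst integral_distr) auto
  also have "\<dots> = (\<integral>x. (\<integral>y. f (x, y) \<partial>distr M K Y) \<partial>distr M N X)"
    unfolding eq[symmetric] by (rule P.integral_fst'[symmetric, OF intP])
  also have "\<dots> \<le> (\<integral>x. g x \<partial>distr M N X)"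
  proof (rule integral_mono[OF P.integrable_fst'[OF intP]])
    show "integrable (distr M N X) g" by (subst integrable_distr_eq) (auto simp: intg)
    fix x assume x: "x \<in> space (distr M N X)"
    then have x': "x \<in> space N" by simp
    have "(\<integral>y. f (x, y) \<partial>distr M K Y) = integral\<^sup>L M (\<lambda>\<omega>. f (x, Y \<omega>))"
      using x' by (subst integral_distr) auto
    also have "\<dots> \<le> g x" using le[OF x'] .
    finally show "(\<integral>y. f (x, y) \<partial>distr M K Y) \<le> g x" .
  qed
  also have "\<dots> = integral\<^sup>L M (\<lambda>\<omega>. g (X \<omega>))"
    by (subst integral_distr) auto
  finally show ?thesis .
qed

lemma vec_borel_measurableI:
  fixes f :: "'a \<Rightarrow> 'b::euclidean_space^'n"
  assumes "\<And>i. (\<lambda>x. f x $ i) \<in> borel_measurable M"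
  shows "f \<in> borel_measurable M"
proof -
  have "(\<lambda>x. f x \<bullet> b) \<in> borel_measurable M" if "b \<in> Basis" for b :: "'b^'n"
  proof -
  from that obtain i u where b: "b = axis i u" "u \<in> Basis" unfolding Basis_vec_def by blast
  have "(\<lambda>x. f x $ i \<bullet> u) \<in> borel_measurable M"
    by (intro borel_measurable_inner assms borel_measurable_const)
  then show ?thesis by (simp add: b inner_axis)
  qed
  then show ?thesis by (subst borel_measurable_euclidean_space) blast
qed

lemma mat_borel_measurableI:
  fixes f :: "'a \<Rightarrow> real^'n^'m"
  assumes "\<And>i j. (\<lambda>x. f x $ i $ j) \<in> borel_measurable M"
  shows "f \<in> borel_measurable M"
  by (rule vec_borel_measurableI, rule vec_borel_measurableI, rule assms)

lemma measurable_vec_nth'[measurable (raw)]: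
  fixes f :: "'a \<Rightarrow> 'b::euclidean_space^'n"
  shows "f \<in> borel_measurable M \<Longrightarrow> (\<lambda>x. f x $ i) \<in> borel_measurable M"
  by (rule measurable_compose[of f M borel]) 
     (auto intro!: borel_measurable_continuous_onI linear_continuous_on bounded_linear_vec_nth)

lemma measurable_mm[measurable (raw)]:
  fixes f :: "'a \<Rightarrow> real^'n^'m" and g :: "'a \<Rightarrow> real^'k^'n"
  shows "f \<in> borel_measurable M \<Longrightarrow> g \<in> borel_measurable M \<Longrightarrow> (\<lambda>x. f x ** g x) \<in> borel_measurable M"
  by (rule mat_borel_measurableI) (simp add: matrix_matrix_mult_def)

lemma measurable_mv[measurable (raw)]:
  fixes f :: "'a \<Rightarrow> real^'n^'m" and g :: "'a \<Rightarrow> real^'n"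
  shows "f \<in> borel_measurable M \<Longrightarrow> g \<in> borel_measurable M \<Longrightarrow> (\<lambda>x. f x *v g x) \<in> borel_measurable M"
  by (rule vec_borel_measurableI) (simp add: matrix_vector_mult_def)

lemma measurable_transpose[measurable (raw)]:
  fixes f :: "'a \<Rightarrow> real^'n^'m"
  shows "f \<in> borel_measurable M \<Longrightarrow> (\<lambda>x. transpose (f x)) \<in> borel_measurable M"
  by (rule mat_borel_measurableI) (simp add: transpose_def)

lemma measurable_lap[measurable (raw)]:
  fixes f :: "'a \<Rightarrow> real^'n^'n"
  shows "f \<in> borel_measurable M \<Longrightarrow> (\<lambda>x. lap (f x)) \<in> borel_measurable M"
  by (rule mat_borel_measurableI) (simp add: lap_def)


lemma weighted_cs:
  fixes w e :: "'i \<Rightarrow> real"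
  assumes "\<And>j. j \<in> S \<Longrightarrow> 0 \<le> w j"
  shows "(\<Sum>j\<in>S. w j * e j)^2 \<le> (\<Sum>j\<in>S. w j) * (\<Sum>j\<in>S. w j * (e j)^2)"
proof -
  have "(\<Sum>j\<in>S. w j * e j) = (\<Sum>j\<in>S. sqrt (w j) * (sqrt (w j) * e j))"
    using assms by (intro sum.cong) (auto simp flip: mult.assoc)
  also have "(\<dots>)^2 \<le> (\<Sum>j\<in>S. (sqrt (w j))^2) * (\<Sum>j\<in>S. (sqrt (w j) * e j)^2)"
    by (rule Cauchy_Schwarz_ineq_sum)
  also have "\<dots> = (\<Sum>j\<in>S. w j) * (\<Sum>j\<in>S. w j * (e j)^2)"
    using assms by (simp add: power_mult_distrib)
  finally show ?thesis .
qed

lemma row_ineq: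
  fixes w y :: "'i::finite \<Rightarrow> real"
  assumes w0: "\<And>j. 0 \<le> w j" and w1: "sum w UNIV = 1" and wr: "sum w (UNIV - {i}) \<le> r"
    and wa: "al \<le> w i" and al: "0 < al"
  shows "(\<Sum>j\<in>UNIV. w j * (y i - y j))^2 \<le> (r/al) * ((\<Sum>j\<in>UNIV. w j * (y j)^2) - (\<Sum>j\<in>UNIV. w j * y j)^2)"
proof -
  define m where "m = (\<Sum>j\<in>UNIV. w j * y j)"
  define d where "d = y i - m"
  define e where "e j = y j - m" for j
  define V where "V = (\<Sum>j\<in>UNIV. w j * (e j)^2)"
  define s where "s = sum w (UNIV - {i})"
  have rem: "sum f UNIV = f i + sum f (UNIV - {i})" for f :: "'i \<Rightarrow> real"
    by (simp add: sum.remove)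
  have dd: "(\<Sum>j\<in>UNIV. w j * (y i - y j)) = d"
    by (simp add: d_def m_def right_diff_distrib sum_subtractf flip: sum_distrib_right) (simp add: w1)
  have V2: "V = (\<Sum>j\<in>UNIV. w j * (y j)^2) - m^2"
  proof -
    have "V = (\<Sum>j\<in>UNIV. w j * (y j)^2 - 2 * m * (w j * y j) + m^2 * w j)"
      unfolding V_def e_def by (intro sum.cong) (auto simp: power2_eq_square algebra_simps)
    also have "\<dots> = (\<Sum>j\<in>UNIV. w j * (y j)^2) - 2 * m * m + m^2 * 1"
      by (simp add: sum.distrib sum_subtractf m_def flip: sum_distrib_left w1)
    finally show ?thesis by (simp add: power2_eq_square)
  qed
  have se: "(\<Sum>j\<in>UNIV. w j * e j) = 0"
    by (simp add: e_def right_diff_distrib sum_subtractf m_def flip: sum_distrib_right) (simp add: w1)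
  have s1: "s + w i = 1" using rem[of w] w1 by (simp add: s_def)
  have se2: "(\<Sum>j\<in>UNIV - {i}. w j * e j) = - (w i * d)"
    using rem[of "\<lambda>j. w j * e j"] se by (simp add: e_def d_def)
  have V3: "V = w i * d^2 + (\<Sum>j\<in>UNIV - {i}. w j * (e j)^2)"
    using rem[of "\<lambda>j. w j * (e j)^2"] by (simp add: V_def e_def d_def)
  have cs: "(w i * d)^2 \<le> s * (\<Sum>j\<in>UNIV - {i}. w j * (e j)^2)"
    using weighted_cs[of "UNIV - {i}" w e] w0 se2 by (simp add: s_def)
  have s0: "0 \<le> s" unfolding s_def by (intro sum_nonneg w0)
  have "w i * d^2 = w i * d^2 * (s + w i)" using s1 by simp
  also have "\<dots> = s * (w i * d^2) + (w i * d)^2" by (simp add: algebra_simps power2_eq_square)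
  also have "\<dots> \<le> s * (w i * d^2) + s * (\<Sum>j\<in>UNIV - {i}. w j * (e j)^2)" using cs by simp
  also have "\<dots> = s * V" by (simp add: V3 algebra_simps)
  finally have key: "w i * d^2 \<le> s * V" .
  have V0: "0 \<le> V" unfolding V_def by (intro sum_nonneg mult_nonneg_nonneg w0) auto
  have "al * d^2 \<le> w i * d^2" using wa by (intro mult_right_mono) auto
  also have "\<dots> \<le> s * V" by (rule key)
  also have "\<dots> \<le> r * V" using wr V0 by (intro mult_right_mono) (auto simp: s_def)
  finally have "al * d^2 \<le> r * V" .
  then have "d^2 \<le> (r/al) * V" using al by (simp add: field_simps)
  then show ?thesis by (simp add: dd V2 m_def)
qed

lemma lap_mv: fixes a :: "real^'n^'n" and i :: 'n shows "(lap a *v y) $ i = (\<Sum>j\<in>UNIV. a$i$j * (y$i - y$j))"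
proof -
  have rem: "sum f UNIV = f i + sum f (UNIV - {i})" for f :: "'n \<Rightarrow> real"
    by (simp add: sum.remove)
  show ?thesis
    apply (simp add: matrix_vector_mult_def lap_def)
    apply (subst (1 2) rem)
    apply (simp add: sum_distrib_right right_diff_distrib sum_subtractf sum_negf)
    done
qed

lemma inner_vm: "(y::real^'n) \<bullet> (z v* L) = z \<bullet> (L *v y)"
proof -
  have "y \<bullet> (z v* L) = (z v* L) \<bullet> y" by (rule inner_commute)
  also have "\<dots> = z \<bullet> (L *v y)" by (rule dot_lmul_matrix)
  finally show ?thesis .
qed

lemma inner_transpose: "(y::real^'n) \<bullet> (transpose L *v z) = (L *v y) \<bullet> z"
  by (simp add: inner_vm inner_commute)

lemma q1_eq: "(y::real^'n) \<bullet> ((transpose (lap a) ** ones_outer ** lap a) *v y) = (\<Sum>i\<in>UNIV. (lap a *v y) $ i)^2"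
proof -
  have e1: "(transpose (lap a) ** ones_outer ** lap a) *v y = transpose (lap a) *v (ones_outer *v (lap a *v y))"
    by (simp only: matrix_vector_mul_assoc matrix_mul_assoc)
  have e2: "ones_outer *v v = (\<chi> i. \<Sum>j\<in>UNIV. v $ j)" for v :: "real^'n"
    by (simp add: ones_outer_def matrix_vector_mult_def)
  show ?thesis
    by (simp only: e1 e2 inner_transpose) (simp add: inner_vec_def power2_eq_square flip: sum_distrib_right)
qed

lemma q2_eq: "(y::real^'n) \<bullet> ((L + transpose L - transpose L ** L) *v y) = y \<bullet> y - (y - L *v y) \<bullet> (y - L *v y)"
  by (simp add: algebra_simps inner_vm inner_diff_left inner_diff_right inner_add_right
      flip: matrix_vector_mul_assoc) (simp add: inner_commute)


lemma integral_entry: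
  fixes F :: "'a \<Rightarrow> real^'n^'m"
  assumes "integrable M F"
  shows "integral\<^sup>L M F $ i $ j = integral\<^sup>L M (\<lambda>\<omega>. F \<omega> $ i $ j)"
proof -
  have i1: "integrable M (\<lambda>\<omega>. F \<omega> $ i)"
    by (rule integrable_bounded_linear[OF bounded_linear_vec_nth assms])
  have "integral\<^sup>L M F $ i = integral\<^sup>L M (\<lambda>\<omega>. F \<omega> $ i)"
    by (rule integral_bounded_linear[OF bounded_linear_vec_nth assms, symmetric])
  also have "\<dots> $ j = integral\<^sup>L M (\<lambda>\<omega>. F \<omega> $ i $ j)"
    by (rule integral_bounded_linear[OF bounded_linear_vec_nth i1, symmetric])
  finally show ?thesis .
qed

lemma integral_quad:
  fixes F :: "'a \<Rightarrow> real^'n^'n"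
  assumes F: "integrable M F"
  shows "y \<bullet> (integral\<^sup>L M F *v y) = integral\<^sup>L M (\<lambda>\<omega>. y \<bullet> (F \<omega> *v y))"
proof -
  have ij: "integrable M (\<lambda>\<omega>. F \<omega> $ i $ j)" for i j
    by (rule integrable_bounded_linear[OF bounded_linear_vec_nth integrable_bounded_linear[OF bounded_linear_vec_nth F]])
  have "y \<bullet> (integral\<^sup>L M F *v y) = (\<Sum>i\<in>UNIV. y $ i * (\<Sum>j\<in>UNIV. integral\<^sup>L M (\<lambda>\<omega>. F \<omega> $ i $ j) * y $ j))"
    by (simp add: inner_vec_def matrix_vector_mult_def integral_entry[OF F])
  also have "\<dots> = integral\<^sup>L M (\<lambda>\<omega>. \<Sum>i\<in>UNIV. y $ i * (\<Sum>j\<in>UNIV. F \<omega> $ i $ j * y $ j))"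
    using ij by (simp add: integral_sum integral_mult_left integral_mult_right integrable_sum)
  also have "\<dots> = integral\<^sup>L M (\<lambda>\<omega>. y \<bullet> (F \<omega> *v y))"
    by (simp add: inner_vec_def matrix_vector_mult_def)
  finally show ?thesis .
qed

context prob_space
begin

definition bm :: "('a \<Rightarrow> real) \<Rightarrow> bool" where
  "bm f \<longleftrightarrow> f \<in> borel_measurable M \<and> (\<exists>c. \<forall>\<omega>\<in>space M. \<bar>f \<omega>\<bar> \<le> c)"

lemma bmI: "f \<in> borel_measurable M \<Longrightarrow> (\<And>\<omega>. \<omega> \<in> space M \<Longrightarrow> \<bar>f \<omega>\<bar> \<le> c) \<Longrightarrow> bm f"
  unfolding bm_def by blast

lemma bm_const[intro!]: "bm (\<lambda>\<omega>. c)"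
  by (rule bmI[where c="\<bar>c\<bar>"]) auto

lemma bm_add[intro!]: "bm f \<Longrightarrow> bm g \<Longrightarrow> bm (\<lambda>\<omega>. f \<omega> + g \<omega>)"
  unfolding bm_def by (auto intro!: exI[where x="_ + _"] abs_triangle_ineq[THEN order_trans] add_mono)

lemma bm_diff[intro!]: "bm f \<Longrightarrow> bm g \<Longrightarrow> bm (\<lambda>\<omega>. f \<omega> - g \<omega>)"
  unfolding bm_def by (auto intro!: exI[where x="_ + _"] abs_triangle_ineq4[THEN order_trans] add_mono)

lemma bm_mult[intro!]: assumes "bm f" "bm g" shows "bm (\<lambda>\<omega>. f \<omega> * g \<omega>)"
proof -
  obtain c d where c: "\<And>\<omega>. \<omega> \<in> space M \<Longrightarrow> \<bar>f \<omega>\<bar> \<le> c" and d: "\<And>\<omega>. \<omega> \<in> space M \<Longrightarrow> \<bar>g \<omega>\<bar> \<le> d"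
    using assms unfolding bm_def by blast
  show ?thesis
  proof (rule bmI[where c="c * d"])
    show "(\<lambda>\<omega>. f \<omega> * g \<omega>) \<in> borel_measurable M" using assms unfolding bm_def by auto
    fix \<omega> assume w: "\<omega> \<in> space M"
    show "\<bar>f \<omega> * g \<omega>\<bar> \<le> c * d" unfolding abs_mult
      using c[OF w] d[OF w] by (intro mult_mono) (auto intro: order_trans[OF abs_ge_zero])
  qed
qed

lemma bm_minus[intro!]: "bm f \<Longrightarrow> bm (\<lambda>\<omega>. - f \<omega>)"
  unfolding bm_def by auto

lemma bm_if[intro!]: "(P \<Longrightarrow> bm f) \<Longrightarrow> (\<not> P \<Longrightarrow> bm g) \<Longrightarrow> bm (\<lambda>\<omega>. if P then f \<omega> else g \<omega>)"
  by (cases P) auto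

lemma bm_sum[intro!]: "(\<And>i. i \<in> I \<Longrightarrow> bm (f i)) \<Longrightarrow> bm (\<lambda>\<omega>. \<Sum>i\<in>I. f i \<omega>)"
  by (induction I rule: infinite_finite_induct) auto

lemma bm_power2[intro!]: "bm f \<Longrightarrow> bm (\<lambda>\<omega>. (f \<omega>)^2)"
  unfolding power2_eq_square by auto

lemma bm_integrable: "bm f \<Longrightarrow> integrable M f"
  unfolding bm_def by (auto intro!: integrable_const_bound AE_I2)

definition bme :: "('a \<Rightarrow> real^'n^'m) \<Rightarrow> bool" where
  "bme F \<longleftrightarrow> (\<forall>i j. bm (\<lambda>\<omega>. F \<omega> $ i $ j))"

lemma bme_integrable:
  fixes F :: "'a \<Rightarrow> real^'n^'m"
  assumes "bme F" shows "integrable M F"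
proof -
  have "\<forall>i j. \<exists>c. \<forall>\<omega>\<in>space M. \<bar>F \<omega> $ i $ j\<bar> \<le> c"
    using assms unfolding bme_def bm_def by blast
  then obtain C where C: "\<And>i j \<omega>. \<omega> \<in> space M \<Longrightarrow> \<bar>F \<omega> $ i $ j\<bar> \<le> C i j"
    by metis
  have meas: "F \<in> borel_measurable M"
    using assms unfolding bme_def bm_def by (intro mat_borel_measurableI) blast
  have "norm (F \<omega>) \<le> (\<Sum>i\<in>UNIV. \<Sum>j\<in>UNIV. C i j)" if "\<omega> \<in> space M" for \<omega>
  proof -
    have "norm (F \<omega>) \<le> (\<Sum>i\<in>UNIV. norm (F \<omega> $ i))"
      unfolding norm_vec_def by (rule L2_set_le_sum) auto
    also have "\<dots> \<le> (\<Sum>i\<in>UNIV. \<Sum>j\<in>UNIV. \<bar>F \<omega> $ i $ j\<bar>)"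
      by (intro sum_mono norm_le_l1_cart)
    also have "\<dots> \<le> (\<Sum>i\<in>UNIV. \<Sum>j\<in>UNIV. C i j)"
      using C[OF that] by (intro sum_mono) auto
    finally show ?thesis .
  qed
  then show ?thesis
    by (intro integrable_const_bound[OF _ meas] AE_I2)
qed

lemma bme_mm[intro!]: "bme F \<Longrightarrow> bme G \<Longrightarrow> bme (\<lambda>\<omega>. F \<omega> ** G \<omega>)"
  unfolding bme_def by (auto simp: matrix_matrix_mult_def)

lemma bme_add[intro!]: "bme F \<Longrightarrow> bme G \<Longrightarrow> bme (\<lambda>\<omega>. F \<omega> + G \<omega>)"
  unfolding bme_def by auto

lemma bme_diff[intro!]: "bme F \<Longrightarrow> bme G \<Longrightarrow> bme (\<lambda>\<omega>. F \<omega> - G \<omega>)"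
  unfolding bme_def by auto

lemma bme_transpose[intro!]: "bme F \<Longrightarrow> bme (\<lambda>\<omega>. transpose (F \<omega>))"
  unfolding bme_def by (auto simp: transpose_def)

lemma bme_lap[intro!]: "bme F \<Longrightarrow> bme (\<lambda>\<omega>. lap (F \<omega>))"
  unfolding bme_def by (auto simp: lap_def)

lemma bme_const[intro!]: "bme (\<lambda>\<omega>. c)"
  unfolding bme_def by auto

end


lemma colsum_lap:
  fixes a :: "real^'n^'n"
  assumes "\<forall>i. (\<Sum>j\<in>UNIV. a $ i $ j) = 1"
  shows "(\<Sum>i\<in>UNIV. lap a $ i $ j) = 1 - (\<Sum>i\<in>UNIV. a $ i $ j)"
proof -
  have rem: "sum f UNIV = f j + sum f (UNIV - {j})" for f :: "'n \<Rightarrow> real"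
    by (simp add: sum.remove)
  have "(\<Sum>i\<in>UNIV. lap a $ i $ j) = (\<Sum>k\<in>UNIV - {j}. a $ j $ k) - (\<Sum>i\<in>UNIV - {j}. a $ i $ j)"
    by (subst rem) (simp add: lap_def sum_negf)
  also have "\<dots> = 1 - (\<Sum>i\<in>UNIV. a $ i $ j)"
    using rem[of "\<lambda>k. a $ j $ k"] rem[of "\<lambda>i. a $ i $ j"] assms by simp
  finally show ?thesis .
qed

lemma mrow:
  fixes a :: "real^'n^'n"
  assumes "\<forall>i. (\<Sum>j\<in>UNIV. a $ i $ j) = 1"
  shows "(y - lap a *v y) $ i = (\<Sum>j\<in>UNIV. a $ i $ j * y $ j)"
  using assms by (simp add: lap_mv right_diff_distrib sum_subtractf flip: sum_distrib_right)

locale cons_setup = prob_space M for M :: "'a measure" +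
  fixes A :: "nat \<Rightarrow> 'a \<Rightarrow> real^'n^'n" and armax al :: real
  assumes measA[measurable]: "\<And>t. A t \<in> borel_measurable M"
    and indepA: "indep_vars (\<lambda>_. borel) A UNIV"
    and nonneg: "\<And>t. AE \<omega> in M. \<forall>i j. A t \<omega> $ i $ j \<ge> 0"
    and stoch: "\<And>t. AE \<omega> in M. \<forall>i. (\<Sum>j\<in>UNIV. A t \<omega> $ i $ j) = 1"
    and colsum: "\<And>t. ones v* (integral\<^sup>L M (\<lambda>\<omega>. lap (A t \<omega>))) = 0"
    and armax_pos: "armax > 0" and al_pos: "al > 0"
    and rowbound: "\<And>t. AE \<omega> in M. \<forall>i. (\<Sum>j\<in>UNIV - {i}. A t \<omega> $ i $ j) \<le> armax"
    and diagbound: "\<And>t. AE \<omega> in M. \<forall>i. A t \<omega> $ i $ i \<ge> al"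
    and uncorr: "\<And>t i j k l. i \<noteq> k \<Longrightarrow>
        integral\<^sup>L M (\<lambda>\<omega>. A t \<omega> $ i $ j * A t \<omega> $ k $ l)
          = integral\<^sup>L M (\<lambda>\<omega>. A t \<omega> $ i $ j) * integral\<^sup>L M (\<lambda>\<omega>. A t \<omega> $ k $ l)"
begin

definition good :: "real^'n^'n \<Rightarrow> bool" where
  "good a \<longleftrightarrow> (\<forall>i j. 0 \<le> a $ i $ j) \<and> (\<forall>i. (\<Sum>j\<in>UNIV. a $ i $ j) = 1)
     \<and> (\<forall>i. (\<Sum>j\<in>UNIV - {i}. a $ i $ j) \<le> armax) \<and> (\<forall>i. al \<le> a $ i $ i)"

lemma AE_good: "AE \<omega> in M. good (A t \<omega>)"
  using nonneg[of t] stoch[of t] rowbound[of t] diagbound[of t]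
  by eventually_elim (simp add: good_def)

lemma ex_good: "\<exists>a. good a"
proof (rule ccontr)
  assume "\<not> ?thesis"
  then have "AE \<omega> in M. False" using AE_good[of 0] by (auto elim: eventually_mono)
  then show False by simp
qed

definition clean :: "real^'n^'n \<Rightarrow> real^'n^'n" where
  "clean a = (if good a then a else (SOME b. good b))"

lemma good_clean: "good (clean a)"
  using someI_ex[OF ex_good] by (simp add: clean_def)

lemma pred_good[measurable]: "Measurable.pred borel good"
  unfolding good_def by measurable

lemma clean_meas[measurable]: "clean \<in> borel_measurable borel"
  unfolding clean_def by measurable

definition B :: "nat \<Rightarrow> 'a \<Rightarrow> real^'n^'n" where
  "B t \<omega> = clean (A t \<omega>)"

lemma measB[measurable]: "B t \<in> borel_measurable M"
proof -
  have "B t = (\<lambda>\<omega>. clean (A t \<omega>))" by (simp add: fun_eq_iff B_def)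
  then show ?thesis by simp
qed

lemma goodB: "good (B t \<omega>)" by (simp add: B_def good_clean)

lemma AE_B: "AE \<omega> in M. B t \<omega> = A t \<omega>"
  using AE_good[of t] by eventually_elim (simp add: B_def clean_def)

lemma indepB: "indep_vars (\<lambda>_. borel) B UNIV"
proof -
  have "B = (\<lambda>i \<omega>. clean (A i \<omega>))" by (simp add: fun_eq_iff B_def)
  then show ?thesis using indep_vars_compose2[OF indepA, where Y="\<lambda>i. clean" and N="\<lambda>_. borel"] by simp
qed

lemma good_nonneg: "good a \<Longrightarrow> 0 \<le> a $ i $ j" by (simp add: good_def)
lemma good_le1: "good a \<Longrightarrow> a $ i $ j \<le> 1"
proof -
  assume g: "good a"
  have "a $ i $ j \<le> (\<Sum>k\<in>UNIV. a $ i $ k)"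
    using g by (intro member_le_sum) (auto simp: good_def)
  then show ?thesis using g by (simp add: good_def)
qed
lemma good_row: "good a \<Longrightarrow> (\<Sum>j\<in>UNIV. a $ i $ j) = 1" by (simp add: good_def)

lemma bm_B[intro!]: "bm (\<lambda>\<omega>. B t \<omega> $ i $ j)"
  by (rule bmI[where c=1]) (use goodB good_nonneg good_le1 in auto)

lemma bme_B[intro!]: "bme (B t)"
  unfolding bme_def by auto

lemma int_cong_B: 
  fixes f :: "real^'n^'n \<Rightarrow> 'b::{banach, second_countable_topology}"
  assumes [measurable]: "f \<in> borel_measurable borel"
  shows "integral\<^sup>L M (\<lambda>\<omega>. f (A t \<omega>)) = integral\<^sup>L M (\<lambda>\<omega>. f (B t \<omega>))"
  by (rule integral_cong_AE) (use AE_B[of t] in \<open>auto elim: eventually_mono\<close>)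

lemma colL: "(\<Sum>i\<in>UNIV. integral\<^sup>L M (\<lambda>\<omega>. lap (B t \<omega>) $ i $ j)) = 0"
proof -
  have e1: "integral\<^sup>L M (\<lambda>\<omega>. lap (A t \<omega>)) = integral\<^sup>L M (\<lambda>\<omega>. lap (B t \<omega>))"
    by (rule int_cong_B) measurable
  have int: "integrable M (\<lambda>\<omega>. lap (B t \<omega>))" by (intro bme_integrable) auto
  have "0 = (ones v* integral\<^sup>L M (\<lambda>\<omega>. lap (B t \<omega>))) $ j" using colsum[of t] e1 by simp
  also have "\<dots> = (\<Sum>i\<in>UNIV. integral\<^sup>L M (\<lambda>\<omega>. lap (B t \<omega>)) $ i $ j)"
    by (simp add: vector_matrix_mult_def ones_def)
  also have "\<dots> = (\<Sum>i\<in>UNIV. integral\<^sup>L M (\<lambda>\<omega>. lap (B t \<omega>) $ i $ j))"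
    by (simp add: integral_entry[OF int])
  finally show ?thesis by simp
qed

lemma col1: "(\<Sum>i\<in>UNIV. integral\<^sup>L M (\<lambda>\<omega>. B t \<omega> $ i $ j)) = 1"
proof -
  have int: "integrable M (\<lambda>\<omega>. B t \<omega> $ i $ j)" for i j by (intro bm_integrable) auto
  have "0 = (\<Sum>i\<in>UNIV. integral\<^sup>L M (\<lambda>\<omega>. lap (B t \<omega>) $ i $ j))" by (rule colL[symmetric])
  also have "\<dots> = integral\<^sup>L M (\<lambda>\<omega>. \<Sum>i\<in>UNIV. lap (B t \<omega>) $ i $ j)"
    by (rule Bochner_Integration.integral_sum[symmetric, where f="\<lambda>i \<omega>. lap (B t \<omega>) $ i $ j"]) (auto intro!: bm_integrable simp: lap_def)
  also have "\<dots> = integral\<^sup>L M (\<lambda>\<omega>. 1 - (\<Sum>i\<in>UNIV. B t \<omega> $ i $ j))"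
    using goodB by (simp add: colsum_lap good_def)
  also have "\<dots> = 1 - (\<Sum>i\<in>UNIV. integral\<^sup>L M (\<lambda>\<omega>. B t \<omega> $ i $ j))"
    using int by (simp add: Bochner_Integration.integral_diff Bochner_Integration.integral_sum prob_space)
  finally show ?thesis by simp
qed

lemma uncB: "i \<noteq> k \<Longrightarrow> integral\<^sup>L M (\<lambda>\<omega>. B t \<omega> $ i $ j * B t \<omega> $ k $ l)
   = integral\<^sup>L M (\<lambda>\<omega>. B t \<omega> $ i $ j) * integral\<^sup>L M (\<lambda>\<omega>. B t \<omega> $ k $ l)"
  using uncorr[of i k t j l]
  by (simp add: int_cong_B[where f="\<lambda>a. a $ i $ j * a $ k $ l"] int_cong_B[where f="\<lambda>a. a $ i $ j"]
       int_cong_B[where f="\<lambda>a. a $ k $ l"])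

end


context cons_setup
begin

lemma bm_X[intro!]: "bm (\<lambda>\<omega>. (lap (B t \<omega>) *v y) $ i)"
  unfolding lap_mv by auto

lemma mrowB: "y $ i - (lap (B t \<omega>) *v y) $ i = (\<Sum>j\<in>UNIV. B t \<omega> $ i $ j * y $ j)"
  using mrow[of "B t \<omega>" y i] goodB[of t \<omega>] by (simp add: good_def)

lemma int_B[simp]: "integrable M (\<lambda>\<omega>. B t \<omega> $ i $ j)"
  by (intro bm_integrable) auto
lemma int_BB[simp]: "integrable M (\<lambda>\<omega>. B t \<omega> $ i $ j * B t \<omega> $ k $ l)"
  by (intro bm_integrable) auto
lemma int_L[simp]: "integrable M (\<lambda>\<omega>. lap (B t \<omega>) $ i $ j)"
  by (intro bm_integrable) (auto simp: lap_def)
lemma int_X[simp]: "integrable M (\<lambda>\<omega>. (lap (B t \<omega>) *v y) $ i)"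
  by (intro bm_integrable) auto

lemma EX0: "integral\<^sup>L M (\<lambda>\<omega>. \<Sum>i\<in>UNIV. (lap (B t \<omega>) *v y) $ i) = 0"
proof -
  have "integral\<^sup>L M (\<lambda>\<omega>. \<Sum>i\<in>UNIV. (lap (B t \<omega>) *v y) $ i)
      = (\<Sum>i\<in>UNIV. integral\<^sup>L M (\<lambda>\<omega>. (lap (B t \<omega>) *v y) $ i))"
    by (rule Bochner_Integration.integral_sum) simp
  also have "\<dots> = (\<Sum>i\<in>UNIV. \<Sum>j\<in>UNIV. integral\<^sup>L M (\<lambda>\<omega>. lap (B t \<omega>) $ i $ j) * y $ j)"
    by (simp add: matrix_vector_mult_def Bochner_Integration.integral_sum)
  also have "\<dots> = (\<Sum>j\<in>UNIV. (\<Sum>i\<in>UNIV. integral\<^sup>L M (\<lambda>\<omega>. lap (B t \<omega>) $ i $ j)) * y $ j)"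
    by (subst sum.swap) (simp add: sum_distrib_right)
  also have "\<dots> = 0" by (simp add: colL)
  finally show ?thesis .
qed

lemma EXi: "integral\<^sup>L M (\<lambda>\<omega>. (lap (B t \<omega>) *v y) $ i)
   = (\<Sum>j\<in>UNIV. integral\<^sup>L M (\<lambda>\<omega>. B t \<omega> $ i $ j) * (y $ i - y $ j))"
  by (simp add: lap_mv Bochner_Integration.integral_sum)

lemma EXX: assumes "i \<noteq> k"
  shows "integral\<^sup>L M (\<lambda>\<omega>. (lap (B t \<omega>) *v y) $ i * (lap (B t \<omega>) *v y) $ k)
   = integral\<^sup>L M (\<lambda>\<omega>. (lap (B t \<omega>) *v y) $ i) * integral\<^sup>L M (\<lambda>\<omega>. (lap (B t \<omega>) *v y) $ k)"
proof -
  have e: "(lap (B t \<omega>) *v y) $ i * (lap (B t \<omega>) *v y) $ k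
     = (\<Sum>j\<in>UNIV. \<Sum>l\<in>UNIV. ((y $ i - y $ j) * (y $ k - y $ l)) * (B t \<omega> $ i $ j * B t \<omega> $ k $ l))" for \<omega>
    by (simp add: lap_mv sum_product algebra_simps)
  have "integral\<^sup>L M (\<lambda>\<omega>. (lap (B t \<omega>) *v y) $ i * (lap (B t \<omega>) *v y) $ k)
     = (\<Sum>j\<in>UNIV. \<Sum>l\<in>UNIV. ((y $ i - y $ j) * (y $ k - y $ l)) * integral\<^sup>L M (\<lambda>\<omega>. B t \<omega> $ i $ j * B t \<omega> $ k $ l))"
    unfolding e by (simp add: Bochner_Integration.integral_sum)
  also have "\<dots> = (\<Sum>j\<in>UNIV. \<Sum>l\<in>UNIV. ((y $ i - y $ j) * (y $ k - y $ l)) * (integral\<^sup>L M (\<lambda>\<omega>. B t \<omega> $ i $ j) * integral\<^sup>L M (\<lambda>\<omega>. B t \<omega> $ k $ l)))"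
    using assms by (simp add: uncB)
  also have "\<dots> = integral\<^sup>L M (\<lambda>\<omega>. (lap (B t \<omega>) *v y) $ i) * integral\<^sup>L M (\<lambda>\<omega>. (lap (B t \<omega>) *v y) $ k)"
    unfolding EXi by (simp add: sum_product algebra_simps)
  finally show ?thesis .
qed

lemma Eq1: "integral\<^sup>L M (\<lambda>\<omega>. (\<Sum>i\<in>UNIV. (lap (B t \<omega>) *v y) $ i)^2)
   \<le> (\<Sum>i\<in>UNIV. integral\<^sup>L M (\<lambda>\<omega>. ((lap (B t \<omega>) *v y) $ i)^2))"
proof -
  define X where "X i \<omega> = (lap (B t \<omega>) *v y) $ i" for i \<omega>
  define E where "E i = integral\<^sup>L M (X i)" for i
  have intX: "integrable M (X i)" for i unfolding X_def by simp
  have intXX: "integrable M (\<lambda>\<omega>. X i \<omega> * X k \<omega>)" for i k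
    unfolding X_def by (intro bm_integrable) auto
  have sE: "(\<Sum>i\<in>UNIV. E i) = 0"
    using EX0[of t y] intX unfolding E_def X_def by (simp add: Bochner_Integration.integral_sum)
  have "integral\<^sup>L M (\<lambda>\<omega>. (\<Sum>i\<in>UNIV. X i \<omega>)^2) = integral\<^sup>L M (\<lambda>\<omega>. \<Sum>i\<in>UNIV. \<Sum>k\<in>UNIV. X i \<omega> * X k \<omega>)"
    by (simp add: power2_eq_square sum_product)
  also have "\<dots> = (\<Sum>i\<in>UNIV. \<Sum>k\<in>UNIV. integral\<^sup>L M (\<lambda>\<omega>. X i \<omega> * X k \<omega>))"
    using intXX by (simp add: Bochner_Integration.integral_sum)
  also have "\<dots> = (\<Sum>i\<in>UNIV. \<Sum>k\<in>UNIV. E i * E k + (if i = k then integral\<^sup>L M (\<lambda>\<omega>. (X i \<omega>)^2) - (E i)^2 else 0))"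
    by (intro sum.cong refl) (auto simp: EXX E_def X_def[abs_def] power2_eq_square)
  also have "\<dots> = (\<Sum>i\<in>UNIV. E i)^2 + (\<Sum>i\<in>UNIV. integral\<^sup>L M (\<lambda>\<omega>. (X i \<omega>)^2) - (E i)^2)"
    by (simp add: sum.distrib power2_eq_square sum_product)
  also have "\<dots> \<le> (\<Sum>i\<in>UNIV. integral\<^sup>L M (\<lambda>\<omega>. (X i \<omega>)^2))"
    unfolding sE by (simp add: sum_subtractf sum_nonneg)
  finally show ?thesis unfolding X_def .
qed

definition gam where "gam = armax / al"

lemma Eq2: "integral\<^sup>L M (\<lambda>\<omega>. ((lap (B t \<omega>) *v y) $ i)^2)
   \<le> gam * integral\<^sup>L M (\<lambda>\<omega>. (\<Sum>j\<in>UNIV. B t \<omega> $ i $ j * (y $ j)^2) - (\<Sum>j\<in>UNIV. B t \<omega> $ i $ j * y $ j)^2)"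
proof -
  have "integral\<^sup>L M (\<lambda>\<omega>. ((lap (B t \<omega>) *v y) $ i)^2)
     \<le> integral\<^sup>L M (\<lambda>\<omega>. gam * ((\<Sum>j\<in>UNIV. B t \<omega> $ i $ j * (y $ j)^2) - (\<Sum>j\<in>UNIV. B t \<omega> $ i $ j * y $ j)^2))"
  proof (rule integral_mono)
    show "integrable M (\<lambda>\<omega>. ((lap (B t \<omega>) *v y) $ i)^2)" by (intro bm_integrable) auto
    show "integrable M (\<lambda>\<omega>. gam * ((\<Sum>j\<in>UNIV. B t \<omega> $ i $ j * (y $ j)^2) - (\<Sum>j\<in>UNIV. B t \<omega> $ i $ j * y $ j)^2))"
      by (intro bm_integrable) auto
    fix \<omega>
    have g: "good (B t \<omega>)" by (rule goodB)
    show "((lap (B t \<omega>) *v y) $ i)^2 \<le> gam * ((\<Sum>j\<in>UNIV. B t \<omega> $ i $ j * (y $ j)^2) - (\<Sum>j\<in>UNIV. B t \<omega> $ i $ j * y $ j)^2)"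
      unfolding lap_mv gam_def
      by (rule row_ineq[where w="\<lambda>j. B t \<omega> $ i $ j" and y="\<lambda>j. y $ j"])
        (use g al_pos in \<open>auto simp: good_def\<close>)
  qed
  then show ?thesis by simp
qed

lemma main1: "integral\<^sup>L M (\<lambda>\<omega>. (\<Sum>i\<in>UNIV. (lap (B t \<omega>) *v y) $ i)^2)
   \<le> gam * integral\<^sup>L M (\<lambda>\<omega>. y \<bullet> y - (y - lap (B t \<omega>) *v y) \<bullet> (y - lap (B t \<omega>) *v y))"
proof -
  have "integral\<^sup>L M (\<lambda>\<omega>. (\<Sum>i\<in>UNIV. (lap (B t \<omega>) *v y) $ i)^2)
     \<le> (\<Sum>i\<in>UNIV. integral\<^sup>L M (\<lambda>\<omega>. ((lap (B t \<omega>) *v y) $ i)^2))" by (rule Eq1)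
  also have "\<dots> \<le> (\<Sum>i\<in>UNIV. gam * integral\<^sup>L M (\<lambda>\<omega>. (\<Sum>j\<in>UNIV. B t \<omega> $ i $ j * (y $ j)^2) - (\<Sum>j\<in>UNIV. B t \<omega> $ i $ j * y $ j)^2))"
    by (intro sum_mono Eq2)
  also have "\<dots> = gam * ((\<Sum>i\<in>UNIV. \<Sum>j\<in>UNIV. integral\<^sup>L M (\<lambda>\<omega>. B t \<omega> $ i $ j) * (y $ j)^2)
        - integral\<^sup>L M (\<lambda>\<omega>. \<Sum>i\<in>UNIV. (\<Sum>j\<in>UNIV. B t \<omega> $ i $ j * y $ j)^2))"
  proof -
    have d: "integral\<^sup>L M (\<lambda>\<omega>. (\<Sum>j\<in>UNIV. B t \<omega> $ i $ j * (y $ j)^2) - (\<Sum>j\<in>UNIV. B t \<omega> $ i $ j * y $ j)^2)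
       = (\<Sum>j\<in>UNIV. integral\<^sup>L M (\<lambda>\<omega>. B t \<omega> $ i $ j) * (y $ j)^2) - integral\<^sup>L M (\<lambda>\<omega>. (\<Sum>j\<in>UNIV. B t \<omega> $ i $ j * y $ j)^2)" for i
      by (subst Bochner_Integration.integral_diff) (auto intro!: bm_integrable simp: Bochner_Integration.integral_sum)
    have s: "integral\<^sup>L M (\<lambda>\<omega>. \<Sum>i\<in>UNIV. (\<Sum>j\<in>UNIV. B t \<omega> $ i $ j * y $ j)^2)
       = (\<Sum>i\<in>UNIV. integral\<^sup>L M (\<lambda>\<omega>. (\<Sum>j\<in>UNIV. B t \<omega> $ i $ j * y $ j)^2))"
      by (rule Bochner_Integration.integral_sum) (auto intro!: bm_integrable)
    show ?thesis by (simp only: d s sum_subtractf sum_distrib_left right_diff_distrib)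
  qed
  also have "(\<Sum>i\<in>UNIV. \<Sum>j\<in>UNIV. integral\<^sup>L M (\<lambda>\<omega>. B t \<omega> $ i $ j) * (y $ j)^2) = y \<bullet> y"
    by (subst sum.swap) (simp add: col1 inner_vec_def power2_eq_square flip: sum_distrib_right)
  also have "integral\<^sup>L M (\<lambda>\<omega>. \<Sum>i\<in>UNIV. (\<Sum>j\<in>UNIV. B t \<omega> $ i $ j * y $ j)^2)
      = integral\<^sup>L M (\<lambda>\<omega>. (y - lap (B t \<omega>) *v y) \<bullet> (y - lap (B t \<omega>) *v y))"
    by (simp add: inner_vec_def mrowB power2_eq_square)
  also have "y \<bullet> y - integral\<^sup>L M (\<lambda>\<omega>. (y - lap (B t \<omega>) *v y) \<bullet> (y - lap (B t \<omega>) *v y))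
     = integral\<^sup>L M (\<lambda>\<omega>. y \<bullet> y - (y - lap (B t \<omega>) *v y) \<bullet> (y - lap (B t \<omega>) *v y))"
  proof -
    have "integrable M (\<lambda>\<omega>. (y - lap (B t \<omega>) *v y) \<bullet> (y - lap (B t \<omega>) *v y))"
      by (intro bm_integrable) (simp add: inner_vec_def; auto)
    then show ?thesis by (simp add: Bochner_Integration.integral_diff prob_space)
  qed
  finally show ?thesis .
qed

end


context cons_setup
begin

lemma bm_q2[intro!]: "bm (\<lambda>\<omega>. y \<bullet> y - (y - lap (B t \<omega>) *v y) \<bullet> (y - lap (B t \<omega>) *v y))"
  by (simp add: inner_vec_def; auto)

lemma part1: "loewner_le
            (integral\<^sup>L M (\<lambda>\<omega>. transpose (lap (A t \<omega>)) ** ones_outer ** lap (A t \<omega>)))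
            ((armax / al) *\<^sub>R integral\<^sup>L M (\<lambda>\<omega>. lap (A t \<omega>) + transpose (lap (A t \<omega>))
                  - transpose (lap (A t \<omega>)) ** lap (A t \<omega>)))"
  unfolding loewner_le_def neg_semidef_def
proof
  fix y :: "real^'n"
  let ?F1 = "\<lambda>a::real^'n^'n. transpose (lap a) ** ones_outer ** lap a"
  let ?F2 = "\<lambda>a::real^'n^'n. lap a + transpose (lap a) - transpose (lap a) ** lap a"
  have e1: "integral\<^sup>L M (\<lambda>\<omega>. ?F1 (A t \<omega>)) = integral\<^sup>L M (\<lambda>\<omega>. ?F1 (B t \<omega>))"
    by (rule int_cong_B) measurable
  have e2: "integral\<^sup>L M (\<lambda>\<omega>. ?F2 (A t \<omega>)) = integral\<^sup>L M (\<lambda>\<omega>. ?F2 (B t \<omega>))"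
    by (rule int_cong_B) measurable
  have i1: "integrable M (\<lambda>\<omega>. ?F1 (B t \<omega>))" by (intro bme_integrable) auto
  have i2: "integrable M (\<lambda>\<omega>. ?F2 (B t \<omega>))" by (intro bme_integrable) auto
  have q1: "y \<bullet> (integral\<^sup>L M (\<lambda>\<omega>. ?F1 (B t \<omega>)) *v y) = integral\<^sup>L M (\<lambda>\<omega>. (\<Sum>i\<in>UNIV. (lap (B t \<omega>) *v y) $ i)^2)"
    by (simp add: integral_quad[OF i1] q1_eq)
  have q2: "y \<bullet> (integral\<^sup>L M (\<lambda>\<omega>. ?F2 (B t \<omega>)) *v y) = integral\<^sup>L M (\<lambda>\<omega>. y \<bullet> y - (y - lap (B t \<omega>) *v y) \<bullet> (y - lap (B t \<omega>) *v y))"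
    by (simp only: integral_quad[OF i2] q2_eq)
  have "y \<bullet> ((integral\<^sup>L M (\<lambda>\<omega>. ?F1 (A t \<omega>)) - (armax / al) *\<^sub>R integral\<^sup>L M (\<lambda>\<omega>. ?F2 (A t \<omega>))) *v y)
      = y \<bullet> (integral\<^sup>L M (\<lambda>\<omega>. ?F1 (B t \<omega>)) *v y) - gam * (y \<bullet> (integral\<^sup>L M (\<lambda>\<omega>. ?F2 (B t \<omega>)) *v y))"
    unfolding e1 e2 gam_def
    by (simp add: matrix_vector_mult_diff_rdistrib inner_diff_right flip: scaleR_matrix_vector_assoc)
  also have "\<dots> \<le> 0" unfolding q1 q2 using main1[of t y] by simp
  finally show "y \<bullet> ((integral\<^sup>L M (\<lambda>\<omega>. ?F1 (A t \<omega>)) - (armax / al) *\<^sub>R integral\<^sup>L M (\<lambda>\<omega>. ?F2 (A t \<omega>))) *v y) \<le> 0" .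
qed

definition W :: "real \<Rightarrow> real \<Rightarrow> real^'n \<Rightarrow> real" where
  "W c \<kappa> v = ((\<Sum>i\<in>UNIV. v $ i) - c)^2 + gam * (\<Sum>i\<in>UNIV. v $ i * v $ i) + \<kappa> * ((\<Sum>i\<in>UNIV. v $ i) - c)"

lemma step: "integral\<^sup>L M (\<lambda>\<omega>. W c \<kappa> (y - lap (B t \<omega>) *v y)) \<le> W c \<kappa> y"
proof -
  define S where "S = (\<Sum>i\<in>UNIV. y $ i)"
  define T where "T \<omega> = (\<Sum>i\<in>UNIV. (lap (B t \<omega>) *v y) $ i)" for \<omega>
  define q2 where "q2 \<omega> = y \<bullet> y - (y - lap (B t \<omega>) *v y) \<bullet> (y - lap (B t \<omega>) *v y)" for \<omega>
  have pw: "W c \<kappa> (y - lap (B t \<omega>) *v y) = W c \<kappa> y - (2 * (S - c) + \<kappa>) * T \<omega> + ((T \<omega>)^2 - gam * q2 \<omega>)" for \<omega>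
    by (simp add: W_def S_def T_def q2_def inner_vec_def sum_subtractf power2_eq_square algebra_simps)
  have iT: "integrable M T" unfolding T_def by (intro bm_integrable) auto
  have iT2: "integrable M (\<lambda>\<omega>. (T \<omega>)^2)" unfolding T_def by (intro bm_integrable) auto
  have iq: "integrable M q2" unfolding q2_def by (intro bm_integrable) auto
  have "integral\<^sup>L M (\<lambda>\<omega>. W c \<kappa> (y - lap (B t \<omega>) *v y))
     = W c \<kappa> y - (2 * (S - c) + \<kappa>) * integral\<^sup>L M T + (integral\<^sup>L M (\<lambda>\<omega>. (T \<omega>)^2) - gam * integral\<^sup>L M q2)"
    unfolding pw using iT iT2 iq
    by (simp add: Bochner_Integration.integral_diff Bochner_Integration.integral_add prob_space)
  also have "integral\<^sup>L M T = 0" unfolding T_def by (rule EX0)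
  also have "integral\<^sup>L M (\<lambda>\<omega>. (T \<omega>)^2) \<le> gam * integral\<^sup>L M q2"
    unfolding T_def q2_def by (rule main1)
  finally show ?thesis by simp
qed

end


lemma traj_dep: "(\<And>s. s < t \<Longrightarrow> C s \<omega> = D s \<omega>') \<Longrightarrow> traj C x0 t \<omega> = traj D x0 t \<omega>'"
  by (induction t) auto

lemma meas_traj:
  fixes C :: "nat \<Rightarrow> 'a \<Rightarrow> real^'n^'n"
  assumes "\<And>s. C s \<in> borel_measurable M"
  shows "(\<lambda>\<omega>. traj C x0 t \<omega>) \<in> borel_measurable M"
proof (induction t)
  case 0 then show ?case by simp
next
  case (Suc t)
  note [measurable] = Suc assms
  show ?case by simp
qed

definition trajP :: "real^'n \<Rightarrow> nat \<Rightarrow> (nat \<Rightarrow> real^'n^'n) \<Rightarrow> real^'n" where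
  "trajP x0 t r = traj (\<lambda>s r. r s) x0 t r"

lemma meas_trajP: "s \<le> t \<Longrightarrow> (\<lambda>r. trajP x0 s r) \<in> borel_measurable (PiM {..<t} (\<lambda>_. borel))"
proof (induction s)
  case 0 then show ?case by (simp add: trajP_def)
next
  case (Suc s)
  then have [measurable]: "(\<lambda>r. trajP x0 s r) \<in> borel_measurable (PiM {..<t} (\<lambda>_. borel))" by simp
  have [measurable]: "(\<lambda>r. r s) \<in> measurable (PiM {..<t} (\<lambda>_. borel)) (borel :: (real^'n^'n) measure)"
    using Suc by (intro measurable_component_singleton) auto
  have "(\<lambda>r. trajP x0 (Suc s) r) = (\<lambda>r. trajP x0 s r - lap (r s) *v trajP x0 s r)"
    by (simp add: trajP_def fun_eq_iff)
  also have "\<dots> \<in> borel_measurable (PiM {..<t} (\<lambda>_. borel))" by measurable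
  finally show ?case .
qed

context cons_setup
begin

lemma W_meas[measurable]: "W c \<kappa> \<in> borel_measurable borel"
  unfolding W_def[abs_def] by measurable

lemma traj_bound: "\<bar>traj B x0 t \<omega> $ i\<bar> \<le> (\<Sum>k\<in>UNIV. \<bar>x0 $ k\<bar>)"
proof (induction t arbitrary: i)
  case 0 show ?case by simp (intro member_le_sum, auto)
next
  case (Suc t)
  define y where "y = traj B x0 t \<omega>"
  define Mx where "Mx = (\<Sum>k\<in>UNIV. \<bar>x0 $ k\<bar>)"
  have g: "good (B t \<omega>)" by (rule goodB)
  have "\<bar>traj B x0 (Suc t) \<omega> $ i\<bar> = \<bar>\<Sum>j\<in>UNIV. B t \<omega> $ i $ j * y $ j\<bar>"
    by (simp add: y_def mrowB)
  also have "\<dots> \<le> (\<Sum>j\<in>UNIV. B t \<omega> $ i $ j * Mx)"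
    using g Suc.IH unfolding y_def Mx_def
    by (intro order_trans[OF sum_abs] sum_mono) (auto simp: abs_mult good_def intro!: mult_left_mono)
  also have "\<dots> = Mx" using g by (simp add: good_def flip: sum_distrib_right)
  finally show ?case by (simp add: Mx_def)
qed

lemma bm_traj[intro!]: "bm (\<lambda>\<omega>. traj B x0 t \<omega> $ i)"
proof -
  have [measurable]: "(\<lambda>\<omega>. traj B x0 t \<omega>) \<in> borel_measurable M" by (rule meas_traj[OF measB])
  show ?thesis by (rule bmI[OF _ traj_bound]) measurable
qed

lemma bm_W_traj: "bm (\<lambda>\<omega>. W c \<kappa> (traj B x0 t \<omega>))"
  unfolding W_def by auto

lemma EW_step: "integral\<^sup>L M (\<lambda>\<omega>. W c \<kappa> (traj B x0 (Suc t) \<omega>)) \<le> integral\<^sup>L M (\<lambda>\<omega>. W c \<kappa> (traj B x0 t \<omega>))"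
proof -
  let ?N = "PiM {..<t} (\<lambda>_. borel) :: (nat \<Rightarrow> real^'n^'n) measure"
  let ?K = "PiM {t} (\<lambda>_. borel) :: (nat \<Rightarrow> real^'n^'n) measure"
  let ?X = "\<lambda>\<omega>. restrict (\<lambda>i. B i \<omega>) {..<t}"
  let ?Y = "\<lambda>\<omega>. restrict (\<lambda>i. B i \<omega>) {t}"
  define f where "f p = W c \<kappa> (trajP x0 t (fst p) - lap (snd p t) *v trajP x0 t (fst p))" for p
  define g where "g r = W c \<kappa> (trajP x0 t r)" for r
  have ind: "indep_var ?N ?X ?K ?Y"
    by (rule indep_var_restrict[OF indepB]) auto
  have [measurable]: "(\<lambda>r. trajP x0 t r) \<in> borel_measurable ?N" by (rule meas_trajP) simp
  have [measurable]: "(\<lambda>r. r t) \<in> measurable ?K (borel :: (real^'n^'n) measure)"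
    by (intro measurable_component_singleton) auto
  have fm: "f \<in> borel_measurable (?N \<Otimes>\<^sub>M ?K)" unfolding f_def[abs_def] by measurable
  have gm: "g \<in> borel_measurable ?N" unfolding g_def[abs_def] by measurable
  have xt: "trajP x0 t (?X \<omega>) = traj B x0 t \<omega>" for \<omega>
    unfolding trajP_def by (rule traj_dep) simp
  have fX: "f (?X \<omega>, ?Y \<omega>) = W c \<kappa> (traj B x0 (Suc t) \<omega>)" for \<omega>
    by (simp add: f_def xt)
  have gX: "g (?X \<omega>) = W c \<kappa> (traj B x0 t \<omega>)" for \<omega>
    by (simp add: g_def xt)
  have "integral\<^sup>L M (\<lambda>\<omega>. f (?X \<omega>, ?Y \<omega>)) \<le> integral\<^sup>L M (\<lambda>\<omega>. g (?X \<omega>))"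
  proof (rule indep_fubini_le[OF ind fm gm])
    show "integrable M (\<lambda>\<omega>. f (?X \<omega>, ?Y \<omega>))" unfolding fX by (intro bm_integrable bm_W_traj)
    show "integrable M (\<lambda>\<omega>. g (?X \<omega>))" unfolding gX by (intro bm_integrable bm_W_traj)
    fix r assume "r \<in> space ?N"
    show "integral\<^sup>L M (\<lambda>\<omega>. f (r, ?Y \<omega>)) \<le> g r"
      unfolding f_def g_def by simp (rule step)
  qed
  then show ?thesis unfolding fX gX .
qed

lemma EW: "integral\<^sup>L M (\<lambda>\<omega>. W c \<kappa> (traj B x0 t \<omega>)) \<le> W c \<kappa> x0"
proof (induction t)
  case 0 then show ?case by (simp add: prob_space)
next
  case (Suc t) then show ?case using EW_step[of c \<kappa> x0 t] by linarith
qed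

end


lemma var_expand:
  fixes x :: "real^'n"
  shows "Var x = ((\<Sum>i\<in>UNIV. x $ i * x $ i) - (\<Sum>i\<in>UNIV. x $ i)^2 / real CARD('n)) / real CARD('n)"
proof -
  define c where "c = (\<Sum>i\<in>UNIV. x $ i)"
  define N where "N = real CARD('n)"
  have N0: "N > 0" by (simp add: N_def)
  have "(\<Sum>i\<in>UNIV. (x $ i - c / N)^2) = (\<Sum>i\<in>UNIV. x $ i * x $ i - 2 * (c / N) * x $ i + (c/N)^2)"
    by (intro sum.cong) (auto simp: power2_eq_square algebra_simps)
  also have "\<dots> = (\<Sum>i\<in>UNIV. x $ i * x $ i) - 2 * (c/N) * c + N * (c/N)^2"
    by (simp only: sum.distrib sum_subtractf flip: sum_distrib_left) (simp add: N_def c_def)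
  also have "\<dots> = (\<Sum>i\<in>UNIV. x $ i * x $ i) - c^2 / N"
    using N0 by (simp add: field_simps power2_eq_square)
  finally show ?thesis by (simp add: Var_def avg_def c_def N_def)
qed

context cons_setup
begin

lemma gam_pos: "gam > 0" using armax_pos al_pos by (simp add: gam_def)

lemma part2: "integral\<^sup>L M (\<lambda>\<omega>. (avg (traj A x0 t \<omega>) - avg x0)^2)
   \<le> (armax / al) / (real CARD('n) + armax / al) * Var x0"
proof -
  define N where "N = real CARD('n)"
  define c where "c = (\<Sum>i\<in>UNIV. x0 $ i)"
  define \<kappa> where "\<kappa> = - 2 * c * gam / N"
  define Q where "Q = (\<Sum>i\<in>UNIV. x0 $ i * x0 $ i)"
  have N0: "N > 0" by (simp add: N_def)
  have g0: "gam > 0" by (rule gam_pos)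
  have [measurable]: "(\<lambda>\<omega>. traj B x0 t \<omega>) \<in> borel_measurable M" by (rule meas_traj[OF measB])
  have [measurable]: "(\<lambda>\<omega>. traj A x0 t \<omega>) \<in> borel_measurable M" by (rule meas_traj[OF measA])
  have AEall: "AE \<omega> in M. \<forall>s. B s \<omega> = A s \<omega>"
    unfolding AE_all_countable using AE_B by blast
  have "integral\<^sup>L M (\<lambda>\<omega>. (avg (traj A x0 t \<omega>) - avg x0)^2) = integral\<^sup>L M (\<lambda>\<omega>. (avg (traj B x0 t \<omega>) - avg x0)^2)"
  proof (rule integral_cong_AE)
    show "AE \<omega> in M. (avg (traj A x0 t \<omega>) - avg x0)^2 = (avg (traj B x0 t \<omega>) - avg x0)^2"
      using AEall
    proof eventually_elim
      case (elim \<omega>)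
      have "traj A x0 t \<omega> = traj B x0 t \<omega>" by (rule traj_dep) (use elim in simp)
      then show ?case by simp
    qed
  qed (unfold avg_def, measurable)
  also have "\<dots> = integral\<^sup>L M (\<lambda>\<omega>. ((\<Sum>i\<in>UNIV. traj B x0 t \<omega> $ i) - c)^2) / N^2"
  proof -
    have "(avg (traj B x0 t \<omega>) - avg x0)^2 = ((\<Sum>i\<in>UNIV. traj B x0 t \<omega> $ i) - c)^2 / N^2" for \<omega>
      by (simp add: avg_def c_def N_def power_divide flip: diff_divide_distrib)
    then show ?thesis by simp
  qed
  finally have e1: "integral\<^sup>L M (\<lambda>\<omega>. (avg (traj A x0 t \<omega>) - avg x0)^2) = integral\<^sup>L M (\<lambda>\<omega>. ((\<Sum>i\<in>UNIV. traj B x0 t \<omega> $ i) - c)^2) / N^2" .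
  define I where "I = integral\<^sup>L M (\<lambda>\<omega>. ((\<Sum>i\<in>UNIV. traj B x0 t \<omega> $ i) - c)^2)"
  have pw: "(1 + gam / N) * ((\<Sum>i\<in>UNIV. v $ i) - c)^2 + gam * c^2 / N \<le> W c \<kappa> v" for v :: "real^'n"
  proof -
    define s where "s = (\<Sum>i\<in>UNIV. v $ i)"
    have cs: "s^2 \<le> N * (\<Sum>i\<in>UNIV. v $ i * v $ i)"
      using Cauchy_Schwarz_ineq_sum[of "\<lambda>_. 1" "\<lambda>i. v $ i" UNIV]
      by (simp add: s_def N_def power2_eq_square)
    have "gam * s^2 / N \<le> gam * (\<Sum>i\<in>UNIV. v $ i * v $ i)"
      using cs N0 g0 by (simp add: field_simps)
    moreover have "(1 + gam / N) * (s - c)^2 + gam * c^2 / N = (s - c)^2 + gam * s^2 / N + \<kappa> * (s - c)"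
      using N0 by (simp add: \<kappa>_def field_simps power2_eq_square)
    ultimately show ?thesis unfolding W_def s_def[symmetric] by linarith
  qed
  have iI: "integrable M (\<lambda>\<omega>. ((\<Sum>i\<in>UNIV. traj B x0 t \<omega> $ i) - c)^2)"
    by (intro bm_integrable) auto
  have "(1 + gam / N) * I + gam * c^2 / N
     = integral\<^sup>L M (\<lambda>\<omega>. (1 + gam / N) * ((\<Sum>i\<in>UNIV. traj B x0 t \<omega> $ i) - c)^2 + gam * c^2 / N)"
    using iI by (simp add: I_def Bochner_Integration.integral_add prob_space)
  also have "\<dots> \<le> integral\<^sup>L M (\<lambda>\<omega>. W c \<kappa> (traj B x0 t \<omega>))"
    by (rule integral_mono) (use iI bm_W_traj bm_integrable pw in auto)
  also have "\<dots> \<le> W c \<kappa> x0" by (rule EW)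
  also have "\<dots> = gam * Q" by (simp add: W_def c_def Q_def)
  finally have key: "(1 + gam / N) * I + gam * c^2 / N \<le> gam * Q" .
  have key2: "(N + gam) * I \<le> gam * N * (Q - c^2 / N)"
  proof -
    have "N * ((1 + gam / N) * I + gam * c^2 / N) \<le> N * (gam * Q)"
      using key N0 by (intro mult_left_mono) auto
    moreover have "N * ((1 + gam / N) * I + gam * c^2 / N) = (N + gam) * I + gam * c^2"
      using N0 by (simp add: field_simps)
    moreover have "gam * N * (Q - c^2 / N) = N * (gam * Q) - gam * c^2"
      using N0 by (simp add: field_simps)
    ultimately show ?thesis by linarith
  qed
  have V: "Var x0 = (Q - c^2 / N) / N" by (simp add: var_expand Q_def c_def N_def)
  have Ng: "N + gam > 0" using N0 g0 by simp
  have "I \<le> gam * N * (Q - c^2 / N) / (N + gam)"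
    using key2 Ng by (simp add: pos_le_divide_eq mult.commute)
  then have "I / N^2 \<le> gam * N * (Q - c^2 / N) / (N + gam) / N^2"
    using N0 by (intro divide_right_mono) auto
  also have "\<dots> = gam / (N + gam) * ((Q - c^2 / N) / N)"
  proof -
    have "gam * N * (Q - c^2 / N) / (N + gam) / N^2 = (gam * (Q - c^2 / N)) * N / ((N + gam) * N * N)"
      by (simp add: power2_eq_square mult.assoc)
    also have "\<dots> = (gam * (Q - c^2 / N)) / ((N + gam) * N)"
      using N0 by (subst mult.assoc[of "N + gam"], subst mult.commute[of N N], subst mult.assoc[symmetric]) simp
    also have "\<dots> = gam / (N + gam) * ((Q - c^2 / N) / N)" by simp
    finally show ?thesis .
  qed
  finally have "I / N^2 \<le> gam / (N + gam) * ((Q - c^2 / N) / N)" .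
  then show ?thesis unfolding e1 I_def[symmetric] V by (simp add: gam_def N_def)
qed

end

theorem theorem4:
  fixes M :: "'a measure"
    and A :: "nat \<Rightarrow> 'a \<Rightarrow> real^'n^'n"
    and x0 :: "real^'n"
    and armax \<alpha> :: real
  assumes "prob_space M"
    and meas: "\<And>t. A t \<in> borel_measurable M"
    and indep: "prob_space.indep_vars M (\<lambda>_. borel) A UNIV"
    and ident: "\<And>t. distr M borel (A t) = distr M borel (A 0)"
    and nonneg: "\<And>t. AE \<omega> in M. \<forall>i j. A t \<omega> $ i $ j \<ge> 0"
    and stoch: "\<And>t. AE \<omega> in M. \<forall>i. (\<Sum>j\<in>UNIV. A t \<omega> $ i $ j) = 1"
    and colsum: "\<And>t. ones v* (integral\<^sup>L M (\<lambda>\<omega>. lap (A t \<omega>))) = 0"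
    and armax_pos: "armax > 0" and alpha_pos: "\<alpha> > 0"
    and rowbound: "\<And>t. AE \<omega> in M. \<forall>i. (\<Sum>j\<in>UNIV - {i}. A t \<omega> $ i $ j) \<le> armax"
    and diagbound: "\<And>t. AE \<omega> in M. \<forall>i. A t \<omega> $ i $ i \<ge> \<alpha>"
    and uncorr: "\<And>t i j k l. i \<noteq> k \<Longrightarrow>
        integral\<^sup>L M (\<lambda>\<omega>. A t \<omega> $ i $ j * A t \<omega> $ k $ l)
          = integral\<^sup>L M (\<lambda>\<omega>. A t \<omega> $ i $ j) * integral\<^sup>L M (\<lambda>\<omega>. A t \<omega> $ k $ l)"
  shows "(\<forall>t. loewner_le
            (integral\<^sup>L M (\<lambda>\<omega>. transpose (lap (A t \<omega>)) ** ones_outer ** lap (A t \<omega>)))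
            ((armax / \<alpha>) *\<^sub>R integral\<^sup>L M (\<lambda>\<omega>. lap (A t \<omega>) + transpose (lap (A t \<omega>))
                  - transpose (lap (A t \<omega>)) ** lap (A t \<omega>))))
       \<and> (\<forall>t. integral\<^sup>L M (\<lambda>\<omega>. (avg (traj A x0 t \<omega>) - avg x0)^2)
              \<le> (armax / \<alpha>) / (real CARD('n) + armax / \<alpha>) * Var x0)"
proof -
  interpret cons_setup M A armax \<alpha>
    by (rule cons_setup.intro[OF assms(1)], unfold_locales) (use assms in auto)
  show ?thesis using part1 part2 by blast
qed


end
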